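(* Let $f=0$ be a structurally nonsingular DAE in $x:\mathbb{R}\to\mathbb{R}^n$, let $(p,q)$ be an optimal solution to $(\mathrm{D}_f)$, let $J=J_f^{p,q}$ be the associated system Jacobian, and let $(U,V)$ be a pair of nonsingular constant matrices $U,V\in\mathbb{R}^{n\times n}$ with $\operatorname{trank}(UJV)<n$ such that $U$ is upper-triangular along $p$ and $V$ is upper-triangular along $q$. Define the DAE $f'=0$ in the new variable $y:\mathbb{R}\to\mathbb{R}^n$ by $f'(y,\dot y,\dots,t):=U(D_t)\,f\big(V(D_t)y,\,V(D_t)\dot y,\,\dots,\,V(D_t)y^{(k)},\,t\big)$, where $U(D_t)=\operatorname{diag}\{D_t^{-p_i}\}\,U\,\operatorname{diag}\{D_t^{p_i}\}$ and $V(D_t)=\operatorname{diag}\{D_t^{-q_i}\}\,V\,\operatorname{diag}\{D_t^{q_i}\}$. Then $\hat\delta_{f'}<\hat\delta_f$.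
   Context: A DAE is $f(x,\dot x,\dots,x^{(k)},t)=0$ with $f:\mathbb{R}^{n(k+1)+1}\to\mathbb{R}^n$ smooth. Its $\sigma$-function is $\sigma_f(i,j)=\max\{l\in\mathbb{Z}_{\ge0}:\partial f_i/\partial x_j^{(l)}\not\equiv0\}$ (with $\max\emptyset=-\infty$). $(\mathrm{D}_f)$ is the problem: minimize $\sum_j q_j-\sum_i p_i$ subject to $q_j-p_i\ge\sigma_f(i,j)$, $p_i,q_j\in\mathbb{Z}_{\ge0}$ for all $i,j\in[n]$; $\hat\delta_f$ is its optimal value ($-\infty$ if infeasible/unbounded), and $f=0$ is structurally nonsingular if $\hat\delta_f\neq-\infty$. For an optimal $(p,q)$, the system Jacobian is the functional matrix $J_f^{p,q}=\big(\partial f_i/\partial x_j^{(q_j-p_i)}\big)_{ij}$ (entries with $q_j-p_i$ not a valid derivative order are zero). The term-rank $\operatorname{trank}M$ is the maximum number of entries not identically zero with no two in a common row or column. A matrix $U$ is upper-triangular along an integer sequence $p$ if $U_{ij}=0$ whenever $p_i>p_j$. $D_t=\mathrm{d}/\mathrm{d}t$; by the triangularity assumptions all entries of $U(D_t),V(D_t)$ are polynomials in $D_t$, explicitly $(U(D_t)f)_i=\sum_k U_{ik}f_k^{(p_k-p_i)}$ and $(V(D_t)y^{(l)})_m=\sum_j V_{mj}y_j^{(q_j-q_m+l)}$. *)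

theory Defs
  imports "HOL-Analysis.Analysis"
begin

text \<open>A point of jet space: J l j is the value of the variable x_j^(l)
  (the l-th derivative of the j-th unknown). Equations and unknowns are both
  indexed by the finite type 'n, so n = CARD('n).\<close>

type_synonym 'n jet = "nat \<Rightarrow> 'n \<Rightarrow> real"
type_synonym 'n jet_fun = "'n jet \<Rightarrow> real \<Rightarrow> real"

definition jupd :: "'n jet \<Rightarrow> nat \<Rightarrow> 'n \<Rightarrow> real \<Rightarrow> 'n jet" where
  "jupd J l j s = J(l := (J l)(j := s))"

definition pdx :: "'n jet_fun \<Rightarrow> 'n \<Rightarrow> nat \<Rightarrow> 'n jet_fun" where
  "pdx g j l = (\<lambda>J t. deriv (\<lambda>s. g (jupd J l j s) t) (J l j))"

definition pdt :: "'n jet_fun \<Rightarrow> 'n jet_fun" where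
  "pdt g = (\<lambda>J t. deriv (\<lambda>s. g J s) t)"

definition jet_order :: "nat \<Rightarrow> 'n jet_fun \<Rightarrow> bool" where
  "jet_order k g \<longleftrightarrow> (\<forall>J J' t. (\<forall>l\<le>k. J l = J' l) \<longrightarrow> g J t = g J' t)"

text \<open>C^m: all partial derivatives up to order m exist and are continuous
  (continuity w.r.t. the product topology, which for functions depending on
  finitely many variables is ordinary continuity).\<close>
primrec smoothC :: "nat \<Rightarrow> 'n jet_fun \<Rightarrow> bool" where
  "smoothC 0 g = continuous_on UNIV (\<lambda>z. g (fst z) (snd z))"
| "smoothC (Suc m) g =
     (continuous_on UNIV (\<lambda>z. g (fst z) (snd z))
      \<and> (\<forall>j l J t. (\<lambda>s. g (jupd J l j s) t) differentiable (at (J l j)))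
      \<and> (\<forall>J t. (\<lambda>s. g J s) differentiable (at t))
      \<and> (\<forall>j l. smoothC m (pdx g j l))
      \<and> smoothC m (pdt g))"

definition smooth_jet :: "'n jet_fun \<Rightarrow> bool" where
  "smooth_jet g \<longleftrightarrow> (\<forall>m. smoothC m g)"

definition is_DAE :: "nat \<Rightarrow> ('n \<Rightarrow> 'n jet_fun) \<Rightarrow> bool" where
  "is_DAE k f \<longleftrightarrow> (\<forall>i. smooth_jet (f i) \<and> jet_order k (f i))"

definition sigma :: "('n \<Rightarrow> 'n jet_fun) \<Rightarrow> 'n \<Rightarrow> 'n \<Rightarrow> ereal" where
  "sigma f i j = (SUP l\<in>{l::nat. pdx (f i) j l \<noteq> (\<lambda>_ _. 0)}. ereal (real l))"

definition DP_feasible :: "('n \<Rightarrow> 'n jet_fun) \<Rightarrow> ('n \<Rightarrow> nat) \<Rightarrow> ('n \<Rightarrow> nat) \<Rightarrow> bool" where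
  "DP_feasible f p q \<longleftrightarrow>
     (\<forall>i j. ereal (real_of_int (int (q j) - int (p i))) \<ge> sigma f i j)"

definition DP_obj :: "('n::finite \<Rightarrow> nat) \<Rightarrow> ('n \<Rightarrow> nat) \<Rightarrow> int" where
  "DP_obj p q = (\<Sum>j\<in>UNIV. int (q j)) - (\<Sum>i\<in>UNIV. int (p i))"

definition DP_optimal :: "('n::finite \<Rightarrow> 'n jet_fun) \<Rightarrow> ('n \<Rightarrow> nat) \<Rightarrow> ('n \<Rightarrow> nat) \<Rightarrow> bool" where
  "DP_optimal f p q \<longleftrightarrow> DP_feasible f p q \<and>
     (\<forall>p' q'. DP_feasible f p' q' \<longrightarrow> DP_obj p q \<le> DP_obj p' q')"

text \<open>Optimal value of (D_f); -\<infinity> if infeasible or unbounded (i.e. no optimum).\<close>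
definition delta_hat :: "('n::finite \<Rightarrow> 'n jet_fun) \<Rightarrow> ereal" where
  "delta_hat f = (if \<exists>p q. DP_optimal f p q
      then ereal (real_of_int (THE v. \<exists>p q. DP_optimal f p q \<and> v = DP_obj p q))
      else -\<infinity>)"

definition sys_jacobian :: "('n \<Rightarrow> 'n jet_fun) \<Rightarrow> ('n \<Rightarrow> nat) \<Rightarrow> ('n \<Rightarrow> nat)
    \<Rightarrow> 'n \<Rightarrow> 'n \<Rightarrow> 'n jet_fun" where
  "sys_jacobian f p q i j = (if p i \<le> q j then pdx (f i) j (q j - p i) else (\<lambda>_ _. 0))"

definition fmat_mult3 :: "real^'n^'n \<Rightarrow> ('n::finite \<Rightarrow> 'n \<Rightarrow> 'n jet_fun) \<Rightarrow> real^'n^'n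
    \<Rightarrow> 'n \<Rightarrow> 'n \<Rightarrow> 'n jet_fun" where
  "fmat_mult3 U M V i j = (\<lambda>J t. \<Sum>a\<in>UNIV. \<Sum>b\<in>UNIV. U$i$a * M a b J t * V$b$j)"

definition trank :: "('n::finite \<Rightarrow> 'n \<Rightarrow> 'n jet_fun) \<Rightarrow> nat" where
  "trank M = Max {card S | S. (\<forall>(i,j)\<in>S. M i j \<noteq> (\<lambda>_ _. 0))
                              \<and> inj_on fst S \<and> inj_on snd S}"

definition upper_tri_along :: "real^'n^'n \<Rightarrow> ('n \<Rightarrow> nat) \<Rightarrow> bool" where
  "upper_tri_along U p \<longleftrightarrow> (\<forall>i j. p i > p j \<longrightarrow> U$i$j = 0)"

text \<open>Total time derivative D_t of a function of jet variables of order at most K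
  (chain rule: D_t g = dg/dt + sum_{j,l} dg/dx_j^(l) * x_j^(l+1)).\<close>
definition Dt :: "nat \<Rightarrow> 'n::finite jet_fun \<Rightarrow> 'n jet_fun" where
  "Dt K g = (\<lambda>J t. pdt g J t + (\<Sum>l\<le>K. \<Sum>j\<in>UNIV. pdx g j l J t * J (Suc l) j))"

primrec Dtpow :: "nat \<Rightarrow> nat \<Rightarrow> 'n::finite jet_fun \<Rightarrow> 'n jet_fun" where
  "Dtpow K 0 g = g"
| "Dtpow K (Suc r) g = Dt (K + r) (Dtpow K r g)"

text \<open>Substitution x = V(D_t) y on jets:
  (V(D_t) y^(l))_m = sum_j V_mj y_j^(q_j - q_m + l)
  (entries with q_m > q_j vanish by upper-triangularity of V along q).\<close>
definition Vsub :: "real^'n^'n \<Rightarrow> ('n::finite \<Rightarrow> nat) \<Rightarrow> 'n jet \<Rightarrow> 'n jet" where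
  "Vsub V q Y = (\<lambda>l m. \<Sum>j\<in>UNIV. if q m \<le> q j then V$m$j * Y (q j - q m + l) j else 0)"

text \<open>f'(y, y', ..., t) = U(D_t) f(V(D_t)y, V(D_t)y', ..., t), i.e.
  f'_i = sum_k U_ik D_t^(p_k - p_i) [f_k(V(D_t) y, ..., t)].
  The composed function has order at most k + max q.\<close>
definition transformed_DAE :: "nat \<Rightarrow> ('n::finite \<Rightarrow> 'n jet_fun) \<Rightarrow> real^'n^'n \<Rightarrow> real^'n^'n
    \<Rightarrow> ('n \<Rightarrow> nat) \<Rightarrow> ('n \<Rightarrow> nat) \<Rightarrow> 'n \<Rightarrow> 'n jet_fun" where
  "transformed_DAE k f U V p q i =
     (\<lambda>Y t. \<Sum>a\<in>UNIV. if p i \<le> p a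
        then U$i$a * Dtpow (k + Max (range q)) (p a - p i) (\<lambda>Y' t'. f a (Vsub V q Y') t') Y t
        else 0)"

end

theory Submission
  imports Defs
begin

lemma hall:
  fixes A :: "'a \<Rightarrow> 'b::finite set"
  assumes "finite I" "\<forall>K\<subseteq>I. card K \<le> card (\<Union>(A ` K))"
  shows "\<exists>f. inj_on f I \<and> (\<forall>i\<in>I. f i \<in> A i)"
  using assms
proof (induct "card I" arbitrary: I A rule: less_induct)
  case less
  note fin = less.prems(1) and H = less.prems(2)
  show ?case
  proof (cases "I = {}")
    case True then show ?thesis by auto
  next
    case ne: False
    show ?thesis
    proof (cases "\<exists>K. K \<subseteq> I \<and> K \<noteq> {} \<and> K \<noteq> I \<and> card (\<Union>(A ` K)) = card K")
      case True
      then obtain K where K: "K \<subseteq> I" "K \<noteq> {}" "K \<noteq> I" "card (\<Union>(A ` K)) = card K" by blast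
      have finK: "finite K" using K(1) fin finite_subset by blast
      have "card K < card I" using K fin by (meson psubsetI psubset_card_mono)
      moreover have "\<forall>L\<subseteq>K. card L \<le> card (\<Union>(A ` L))" using H K(1) by blast
      ultimately obtain f1 where f1: "inj_on f1 K" "\<forall>i\<in>K. f1 i \<in> A i"
        using less.hyps finK by blast
      define A2 where "A2 = (\<lambda>i. A i - \<Union>(A ` K))"
      have "card (I - K) < card I"
      proof -
        have "card (I - K) = card I - card K" by (rule card_Diff_subset[OF finK K(1)])
        moreover have "card K > 0" using finK K(2) by auto
        moreover have "card K \<le> card I" using K(1) fin by (rule card_mono[rotated])
        ultimately show ?thesis by linarith
      qed
      moreover have "\<forall>L\<subseteq>I - K. card L \<le> card (\<Union>(A2 ` L))"
      proof (intro allI impI)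
        fix L assume L: "L \<subseteq> I - K"
        have finL: "finite L" using L fin finite_subset by blast
        have e: "\<Union>(A2 ` L) = \<Union>(A ` (L \<union> K)) - \<Union>(A ` K)" unfolding A2_def by auto
        have "card (\<Union>(A2 ` L)) = card (\<Union>(A ` (L \<union> K))) - card (\<Union>(A ` K))"
          unfolding e by (rule card_Diff_subset) auto
        moreover have "card (L \<union> K) \<le> card (\<Union>(A ` (L \<union> K)))" using H L K(1)
          by (metis Diff_subset Un_subset_iff order_trans)
        moreover have "card (L \<union> K) = card L + card K"
          using L finL finK by (subst card_Un_disjoint) auto
        ultimately show "card L \<le> card (\<Union>(A2 ` L))" using K(4) by linarith
      qed
      ultimately obtain f2 where f2: "inj_on f2 (I - K)" "\<forall>i\<in>I - K. f2 i \<in> A2 i"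
        using less.hyps fin by (metis finite_Diff)
      define f where "f = (\<lambda>i. if i \<in> K then f1 i else f2 i)"
      have "inj_on f I"
        unfolding inj_on_def
      proof (intro ballI impI)
        fix x y assume xy: "x \<in> I" "y \<in> I" "f x = f y"
        show "x = y"
        proof (cases "x \<in> K"; cases "y \<in> K")
          assume "x \<in> K" "y \<in> K" then show ?thesis using xy f1 unfolding f_def inj_on_def by auto
        next
          assume a: "x \<in> K" "y \<notin> K"
          then have "f1 x \<in> \<Union>(A ` K)" "f2 y \<notin> \<Union>(A ` K)" using f1 f2 xy unfolding A2_def by auto
          then show ?thesis using xy a unfolding f_def by auto
        next
          assume a: "x \<notin> K" "y \<in> K"
          then have "f1 y \<in> \<Union>(A ` K)" "f2 x \<notin> \<Union>(A ` K)" using f1 f2 xy unfolding A2_def by auto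
          then show ?thesis using xy a unfolding f_def by auto
        next
          assume "x \<notin> K" "y \<notin> K" then show ?thesis using xy f2 unfolding f_def inj_on_def by auto
        qed
      qed
      moreover have "\<forall>i\<in>I. f i \<in> A i" using f1 f2 unfolding f_def A2_def by auto
      ultimately show ?thesis by blast
    next
      case False
      have strict: "card K < card (\<Union>(A ` K))" if a: "K \<subseteq> I" "K \<noteq> {}" "K \<noteq> I" for K
      proof -
        have "card K \<le> card (\<Union>(A ` K))" using H a(1) by blast
        moreover have "card (\<Union>(A ` K)) \<noteq> card K" using False a by blast
        ultimately show ?thesis by linarith
      qed
      obtain i0 where i0: "i0 \<in> I" using ne by blast
      have "card {i0} \<le> card (\<Union>(A ` {i0}))" using H i0 by (meson empty_subsetI insert_subsetI)
      then have "A i0 \<noteq> {}" by auto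
      then obtain c where c: "c \<in> A i0" by blast
      define A' where "A' = (\<lambda>i. A i - {c})"
      have "card (I - {i0}) < card I" using fin i0 by (meson card_Diff1_less)
      moreover have "\<forall>L\<subseteq>I - {i0}. card L \<le> card (\<Union>(A' ` L))"
      proof (intro allI impI)
        fix L assume L: "L \<subseteq> I - {i0}"
        show "card L \<le> card (\<Union>(A' ` L))"
        proof (cases "L = {}")
          case True then show ?thesis by simp
        next
          case False
          have "L \<noteq> I" using L i0 by auto
          then have "card L < card (\<Union>(A ` L))" using strict L False by auto
          moreover have "card (\<Union>(A' ` L)) = card (\<Union>(A ` L) - {c})"
          proof -
            have "\<Union>(A' ` L) = \<Union>(A ` L) - {c}" unfolding A'_def by auto
            then show ?thesis by simp
          qed
          moreover have "card (\<Union>(A ` L) - {c}) \<ge> card (\<Union>(A ` L)) - 1"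
            using diff_card_le_card_Diff[of "{c}" "\<Union>(A ` L)"] by simp
          ultimately show ?thesis by linarith
        qed
      qed
      ultimately obtain f' where f': "inj_on f' (I - {i0})" "\<forall>i\<in>I - {i0}. f' i \<in> A' i"
        using less.hyps fin by (metis finite_Diff)
      define f where "f = f'(i0 := c)"
      have "inj_on f I"
      proof -
        have "inj_on f (I - {i0})" using f' unfolding f_def inj_on_def by auto
        moreover have "f i0 \<notin> f ` (I - {i0})" using f' unfolding f_def A'_def by auto
        ultimately have "inj_on f (insert i0 (I - {i0}))" by (simp only: inj_on_insert) simp
        moreover have "insert i0 (I - {i0}) = I" using i0 by blast
        ultimately show ?thesis by simp
      qed
      moreover have "\<forall>i\<in>I. f i \<in> A i" using f' c unfolding f_def A'_def by auto
      ultimately show ?thesis by blast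
    qed
  qed
qed

definition indep :: "'n jet_fun \<Rightarrow> 'n \<Rightarrow> nat \<Rightarrow> bool" where
  "indep g j l \<longleftrightarrow> (\<forall>Y t s. g (jupd Y l j s) t = g Y t)"

lemma jupd_same[simp]: "jupd Y l j (Y l j) = Y"
  unfolding jupd_def by auto
lemma jupd_jupd[simp]: "jupd (jupd Y l j s) l j s' = jupd Y l j s'"
  unfolding jupd_def by auto
lemma jupd_at[simp]: "jupd Y l j s l j = s"
  unfolding jupd_def by auto
lemma jupd_apply: "jupd Y l j s a b = (if a = l \<and> b = j then s else Y a b)"
  unfolding jupd_def by auto
lemma jupd_comm: "(l,j) \<noteq> (l',j') \<Longrightarrow> jupd (jupd Y l j s) l' j' s' = jupd (jupd Y l' j' s') l j s"
  unfolding jupd_def by (auto simp: fun_eq_iff)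

lemma deriv_constf: "deriv (\<lambda>s. c) x = (0::real)"
  by (rule DERIV_imp_deriv) (rule DERIV_const)

lemma indep_pdx0: "indep g j l \<Longrightarrow> pdx g j l Y t = 0"
  unfolding indep_def pdx_def by (simp add: deriv_constf)

lemma indep_pdx: assumes "indep g j l" shows "indep (pdx g j' l') j l"
  unfolding indep_def
proof (intro allI)
  fix Y t s
  show "pdx g j' l' (jupd Y l j s) t = pdx g j' l' Y t"
  proof (cases "(l,j) = (l',j')")
    case True
    then have e: "l' = l" "j' = j" by auto
    show ?thesis unfolding e using indep_pdx0[OF assms] by simp
  next
    case False
    have "(\<lambda>s'. g (jupd (jupd Y l j s) l' j' s') t) = (\<lambda>s'. g (jupd Y l' j' s') t)"
    proof
      fix s'
      show "g (jupd (jupd Y l j s) l' j' s') t = g (jupd Y l' j' s') t"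
        using assms jupd_comm[OF False, of Y s s'] unfolding indep_def by metis
    qed
    moreover have "jupd Y l j s l' j' = Y l' j'" using False by (auto simp: jupd_apply)
    ultimately show ?thesis unfolding pdx_def by simp
  qed
qed

lemma indep_pdt: assumes "indep g j l" shows "indep (pdt g) j l"
  unfolding indep_def pdt_def
proof (intro allI)
  fix Y t s
  have "(\<lambda>s'. g (jupd Y l j s) s') = (\<lambda>s'. g Y s')" using assms by (simp add: indep_def)
  then show "deriv (\<lambda>s'. g (jupd Y l j s) s') t = deriv (\<lambda>s'. g Y s') t" by simp
qed

lemma indep_Dt:
  assumes "indep g j L" "\<And>l. L = Suc l \<Longrightarrow> l \<le> K \<Longrightarrow> indep g j l"
  shows "indep (Dt K g) j L"
  unfolding indep_def
proof (intro allI)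
  fix Y t s
  have a: "pdt g (jupd Y L j s) t = pdt g Y t" using indep_pdt[OF assms(1)] unfolding indep_def by blast
  have b: "pdx g j' l (jupd Y L j s) t * jupd Y L j s (Suc l) j' = pdx g j' l Y t * Y (Suc l) j'"
    if "l \<le> K" for l j'
  proof -
    have "pdx g j' l (jupd Y L j s) t = pdx g j' l Y t"
      using indep_pdx[OF assms(1)] unfolding indep_def by blast
    moreover have "pdx g j' l Y t * jupd Y L j s (Suc l) j' = pdx g j' l Y t * Y (Suc l) j'"
    proof (cases "Suc l = L \<and> j' = j")
      case True
      then have "pdx g j' l Y t = 0" using assms(2) that indep_pdx0 by auto
      then show ?thesis by simp
    next
      case False then show ?thesis by (auto simp: jupd_apply)
    qed
    ultimately show ?thesis by simp
  qed
  show "Dt K g (jupd Y L j s) t = Dt K g Y t"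
    unfolding Dt_def using a b by simp
qed

lemma Dt_jupd_lead:
  assumes "indep g j (Suc l)" "l \<le> K"
  shows "Dt K g (jupd Y (Suc l) j s) t = Dt K g Y t + pdx g j l Y t * (s - Y (Suc l) j)"
proof -
  have a: "pdt g (jupd Y (Suc l) j s) t = pdt g Y t" using indep_pdt[OF assms(1)] unfolding indep_def by blast
  have b: "pdx g j' l' (jupd Y (Suc l) j s) t * jupd Y (Suc l) j s (Suc l') j'
     = pdx g j' l' Y t * Y (Suc l') j' + (if l' = l \<and> j' = j then pdx g j l Y t * (s - Y (Suc l) j) else 0)"
    for l' j'
  proof -
    have "pdx g j' l' (jupd Y (Suc l) j s) t = pdx g j' l' Y t"
      using indep_pdx[OF assms(1)] unfolding indep_def by blast
    then show ?thesis by (auto simp: jupd_apply algebra_simps)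
  qed
  have "(\<Sum>l'\<le>K. \<Sum>j'\<in>UNIV. pdx g j' l' (jupd Y (Suc l) j s) t * jupd Y (Suc l) j s (Suc l') j')
     = (\<Sum>l'\<le>K. \<Sum>j'\<in>UNIV. pdx g j' l' Y t * Y (Suc l') j') +
       (\<Sum>l'\<le>K. \<Sum>j'\<in>UNIV. (if l' = l \<and> j' = j then pdx g j l Y t * (s - Y (Suc l) j) else 0))"
    unfolding b by (simp add: sum.distrib)
  also have "(\<Sum>l'\<le>K. \<Sum>j'\<in>UNIV. (if l' = l \<and> j' = j then pdx g j l Y t * (s - Y (Suc l) j) else 0))
      = pdx g j l Y t * (s - Y (Suc l) j)"
  proof -
    have "(\<Sum>j'\<in>UNIV. (if l' = l \<and> j' = j then c else 0)) = (if l' = l then c else 0)" for l' and c :: real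
      by (cases "l' = l") auto
    then show ?thesis using assms(2) by simp
  qed
  finally show ?thesis unfolding Dt_def using a by simp
qed

lemma Dt_lead_deriv:
  assumes "indep g j (Suc l)" "l \<le> K"
  shows "((\<lambda>s. Dt K g (jupd Y (Suc l) j s) t) has_real_derivative pdx g j l Y t) (at x)"
  unfolding Dt_jupd_lead[OF assms]
  by (auto intro!: derivative_eq_intros)

definition bnd :: "'n jet_fun \<Rightarrow> ('n \<Rightarrow> int) \<Rightarrow> bool" where
  "bnd g d \<longleftrightarrow> (\<forall>j l. d j < int l \<longrightarrow> indep g j l)"

lemma bnd_Dt: assumes "bnd g d" shows "bnd (Dt K g) (\<lambda>j. d j + 1)"
  unfolding bnd_def
proof (intro allI impI)
  fix j l assume l: "d j + 1 < int l"
  show "indep (Dt K g) j l"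
    by (rule indep_Dt) (use assms l in \<open>auto simp: bnd_def\<close>)
qed

lemma bnd_Dtpow: assumes "bnd g d" shows "bnd (Dtpow K r g) (\<lambda>j. d j + int r)"
proof (induct r)
  case 0 then show ?case using assms by simp
next
  case (Suc r)
  have "bnd (Dt (K + r) (Dtpow K r g)) (\<lambda>j. (d j + int r) + 1)" by (rule bnd_Dt[OF Suc])
  moreover have "(\<lambda>j. (d j + int r) + 1) = (\<lambda>j. d j + int (Suc r))" by auto
  ultimately show ?case by simp
qed

lemma Dtpow_lead:
  assumes bg: "bnd g d" and dK: "d j \<le> int K"
    and c: "0 \<le> d j \<Longrightarrow> (\<And>Y t. ((\<lambda>s. g (jupd Y (nat (d j)) j s) t) has_real_derivative c Y t) (at (Y (nat (d j)) j)))"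
  shows "int L = d j + int r \<Longrightarrow>
    ((\<lambda>s. Dtpow K r g (jupd Y L j s) t) has_real_derivative (if 0 \<le> d j then c Y t else 0)) (at (Y L j))"
proof (induct r arbitrary: L Y t)
  case 0
  then have "0 \<le> d j" "nat (d j) = L" by auto
  then show ?case using c by simp
next
  case (Suc r)
  define h where "h = Dtpow K r g"
  have bh: "bnd h (\<lambda>j. d j + int r)" unfolding h_def by (rule bnd_Dtpow[OF bg])
  have eq: "Dtpow K (Suc r) g = Dt (K + r) h" unfolding h_def by simp
  show ?case
  proof (cases L)
    case 0
    then have neg: "d j < 0" "d j + int r < 0" using Suc.prems by auto
    have "indep h j 0" using bh neg unfolding bnd_def by auto
    then have "indep (Dt (K + r) h) j 0" by (intro indep_Dt) auto
    then have "(\<lambda>s. Dtpow K (Suc r) g (jupd Y L j s) t) = (\<lambda>s. Dtpow K (Suc r) g Y t)"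
      unfolding eq 0 indep_def by auto
    then show ?thesis using neg by (simp add: DERIV_const)
  next
    case (Suc l)
    have il: "int l = d j + int r" using Suc.prems Suc by auto
    have ind: "indep h j (Suc l)" using bh il unfolding bnd_def by auto
    have lK: "l \<le> K + r" using il dK by linarith
    have D: "((\<lambda>s. Dt (K + r) h (jupd Y (Suc l) j s) t) has_real_derivative pdx h j l Y t) (at (Y (Suc l) j))"
      by (rule Dt_lead_deriv[OF ind lK])
    have IH: "((\<lambda>s. h (jupd Y l j s) t) has_real_derivative (if 0 \<le> d j then c Y t else 0)) (at (Y l j))"
      unfolding h_def by (rule Suc.hyps[OF il])
    have "pdx h j l Y t = (if 0 \<le> d j then c Y t else 0)"
      unfolding pdx_def by (rule DERIV_imp_deriv[OF IH])
    then show ?thesis using D unfolding eq Suc by simp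
  qed
qed

definition addj :: "'n jet \<Rightarrow> 'n set \<Rightarrow> ('n \<Rightarrow> nat) \<Rightarrow> ('n \<Rightarrow> real) \<Rightarrow> 'n jet" where
  "addj X M lv \<delta> = (\<lambda>l m. X l m + (if m \<in> M \<and> l = lv m then \<delta> m else 0))"

lemma addj_empty[simp]: "addj X {} lv \<delta> = X"
  unfolding addj_def by simp

lemma addj_insert:
  "m0 \<notin> M \<Longrightarrow> addj X (insert m0 M) lv \<delta> = jupd (addj X M lv \<delta>) (lv m0) m0 (X (lv m0) m0 + \<delta> m0)"
  unfolding addj_def jupd_def by (auto simp: fun_eq_iff)

lemma addj_indep:
  fixes g :: "'n::finite jet_fun"
  assumes "\<forall>m\<in>M. indep g m (lv m)"
  shows "g (addj X M lv \<delta>) t = g X t"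
proof -
  have "finite M" by simp
  then show ?thesis using assms
  proof (induct M rule: finite_induct)
    case empty then show ?case by simp
  next
    case (insert m0 M)
    then show ?case unfolding addj_insert[OF insert(2)] indep_def by simp
  qed
qed

lemma Vsub_jupd:
  "Vsub V q (jupd Y L j s) = addj (Vsub V q Y) {m. q m \<le> q j \<and> q j \<le> L + q m} (\<lambda>m. L + q m - q j)
     (\<lambda>m. V$m$j * (s - Y L j))"
proof (intro ext)
  fix l m
  have t: "(if q m \<le> q j' then V$m$j' * jupd Y L j s (q j' - q m + l) j' else 0)
    = (if q m \<le> q j' then V$m$j' * Y (q j' - q m + l) j' else 0)
      + (if j' = j then (if q m \<le> q j \<and> q j - q m + l = L then V$m$j * (s - Y L j) else 0) else 0)" for j'
    by (auto simp: jupd_apply algebra_simps)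
  have c: "(q m \<le> q j \<and> q j - q m + l = L) \<longleftrightarrow> (m \<in> {m. q m \<le> q j \<and> q j \<le> L + q m} \<and> l = L + q m - q j)"
    by auto
  show "Vsub V q (jupd Y L j s) l m = addj (Vsub V q Y) {m. q m \<le> q j \<and> q j \<le> L + q m} (\<lambda>m. L + q m - q j)
     (\<lambda>m. V$m$j * (s - Y L j)) l m"
    unfolding Vsub_def addj_def t sum.distrib using c by simp
qed

lemma smoothC1_diff:
  assumes "smoothC (Suc 0) g"
  shows "((\<lambda>s. g (jupd J l j s) t) has_real_derivative pdx g j l J t) (at (J l j))"
proof -
  have "(\<lambda>s. g (jupd J l j s) t) differentiable (at (J l j))" using assms by simp
  then show ?thesis unfolding pdx_def using DERIV_deriv_iff_real_differentiable by blast
qed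

lemma smoothC1_cont:
  assumes "smoothC (Suc 0) g"
  shows "continuous_on UNIV (\<lambda>z. pdx g j l (fst z) (snd z))"
  using assms by simp

lemma line_chain:
  fixes g :: "'n::finite jet_fun"
  assumes sm: "smoothC (Suc 0) g"
  shows "((\<lambda>h. g (addj X M lv (\<lambda>m. h * w m)) t) has_real_derivative (\<Sum>m\<in>M. w m * pdx g m (lv m) X t)) (at 0)"
proof -
  have "finite M" by simp
  then show ?thesis
  proof (induct M rule: finite_induct)
    case empty then show ?case by (simp add: DERIV_const)
  next
    case (insert m0 M)
    define D where "D = (\<Sum>m\<in>M. w m * pdx g m (lv m) X t)"
    define J where "J x y = jupd (addj X M lv (\<lambda>m. x * w m)) (lv m0) m0 (X (lv m0) m0 + y)" for x y
    define F where "F x y = g (J x y) t" for x y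
    define P where "P x y = pdx g m0 (lv m0) (J x y) t" for x y
    have phi: "(\<lambda>h. g (addj X (insert m0 M) lv (\<lambda>m. h * w m)) t) = (\<lambda>h. F h (h * w m0))"
      using addj_insert[OF insert(2)] by (simp add: F_def J_def)
    have a0: "addj X M lv (\<lambda>m. x * w m) (lv m0) m0 = X (lv m0) m0" for x
      using insert(2) unfolding addj_def by simp
    have J0: "J x 0 = addj X M lv (\<lambda>m. x * w m)" for x
      unfolding J_def using a0[of x] by (metis add_0_right jupd_same)
    have J00: "J 0 0 = X" unfolding J0 addj_def by (simp add: fun_eq_iff)
    have fx: "((\<lambda>x. F x 0) has_derivative (*) D) (at 0 within UNIV)"
      using insert(3) unfolding F_def J0 D_def has_field_derivative_def by simp
    have fy: "((\<lambda>y. F x y) has_derivative blinfun_apply (blinfun_mult_left (P x y))) (at y within UNIV)" for x y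
    proof -
      have d1: "((\<lambda>s. g (jupd (J x y) (lv m0) m0 s) t) has_real_derivative P x y) (at (J x y (lv m0) m0))"
        unfolding P_def by (rule smoothC1_diff[OF sm])
      have e1: "J x y (lv m0) m0 = X (lv m0) m0 + y" unfolding J_def by simp
      have e2: "jupd (J x y) (lv m0) m0 s = J x (s - X (lv m0) m0)" for s unfolding J_def by simp
      have d2: "((\<lambda>y'. X (lv m0) m0 + y') has_real_derivative 1) (at y)"
        by (auto intro!: derivative_eq_intros)
      have "((\<lambda>y'. g (jupd (J x y) (lv m0) m0 (X (lv m0) m0 + y')) t) has_real_derivative P x y * 1) (at y)"
        using DERIV_chain2[OF d1[unfolded e1] d2] .
      then have "((\<lambda>y'. F x y') has_real_derivative P x y) (at y)"
        unfolding e2 F_def by simp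
      moreover have "(*) (P x y) = blinfun_apply (blinfun_mult_left (P x y))"
        by (auto simp: fun_eq_iff)
      ultimately show ?thesis unfolding has_field_derivative_def by simp
    qed
    have Jform: "J x y = (\<lambda>l m. if l = lv m0 \<and> m = m0 then X (lv m0) m0 + y
        else X l m + (if m \<in> M \<and> l = lv m then x * w m else 0))" for x y
      unfolding J_def jupd_def addj_def by (auto simp: fun_eq_iff)
    have contJ: "continuous_on UNIV (\<lambda>z::real\<times>real. J (fst z) (snd z))"
      unfolding Jform
      apply (intro continuous_on_coordinatewise_then_product)
      subgoal for l m
        by (cases "l = lv m0 \<and> m = m0"; cases "m \<in> M \<and> l = lv m") (auto intro!: continuous_intros)
      done
    have contP: "continuous_on UNIV (\<lambda>z::real\<times>real. P (fst z) (snd z))"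
    proof -
      have "continuous_on UNIV (\<lambda>z::real\<times>real. (J (fst z) (snd z), t))"
        by (intro continuous_on_Pair contJ continuous_on_const)
      from continuous_on_compose2[OF smoothC1_cont[OF sm, of m0 "lv m0"] this]
      show ?thesis unfolding P_def by simp
    qed
    have cont: "continuous (at (0,0) within UNIV \<times> UNIV) (\<lambda>(x,y). blinfun_mult_left (P x y))"
    proof -
      have "continuous (at (0,0)) (\<lambda>z::real\<times>real. P (fst z) (snd z))"
        using contP by (simp add: continuous_on_eq_continuous_at)
      then have "continuous (at (0,0)) (\<lambda>z::real\<times>real. blinfun_mult_left (P (fst z) (snd z)))"
        by (rule bounded_linear.continuous[OF bounded_linear_blinfun_mult_left])
      moreover have "(\<lambda>(x,y). blinfun_mult_left (P x y)) = (\<lambda>z::real\<times>real. blinfun_mult_left (P (fst z) (snd z)))"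
        by (auto simp: fun_eq_iff)
      ultimately show ?thesis by simp
    qed
    have H: "((\<lambda>(x, y). F x y) has_derivative (\<lambda>(tx, ty). D * tx + blinfun_apply (blinfun_mult_left (P 0 0)) ty))
        (at (0, 0) within UNIV \<times> UNIV)"
      by (rule has_derivative_partialsI[OF fx fy cont]) auto
    have H': "((\<lambda>z. F (fst z) (snd z)) has_derivative (\<lambda>z. D * fst z + snd z * P 0 0)) (at ((\<lambda>h::real. (h, h * w m0)) 0))"
    proof -
      have "(\<lambda>(x, y). F x y) = (\<lambda>z. F (fst z) (snd z))" "(\<lambda>(tx, ty). D * tx + ty * P 0 0) = (\<lambda>z. D * fst z + snd z * P 0 0)"
        by (auto simp: fun_eq_iff)
      then show ?thesis using H by simp
    qed
    have L: "((\<lambda>h::real. (h, h * w m0)) has_derivative (\<lambda>h. (h, h * w m0))) (at 0)"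
      by (auto intro!: derivative_eq_intros)
    have "((\<lambda>h. F h (h * w m0)) has_derivative (\<lambda>h. D * h + h * w m0 * P 0 0)) (at 0)"
      using diff_chain_at[OF L H'] by (simp add: o_def)
    moreover have "(\<lambda>h. D * h + h * w m0 * P 0 0) = (*) (w m0 * pdx g m0 (lv m0) X t + D)"
      unfolding P_def J00 by (auto simp: fun_eq_iff algebra_simps)
    ultimately show ?case
      unfolding phi has_field_derivative_def using insert(1,2) D_def by simp
  qed
qed

lemma sigma_mem_le:
  assumes "ereal c \<ge> sigma f i j" "pdx (f i) j l \<noteq> (\<lambda>_ _. 0)"
  shows "real l \<le> c"
proof -
  have "ereal (real l) \<le> sigma f i j" unfolding sigma_def using assms(2) by (auto intro: SUP_upper)
  then have "ereal (real l) \<le> ereal c" using assms(1) by (rule order_trans)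
  then show ?thesis by simp
qed

lemma DAE_smooth1: "is_DAE k f \<Longrightarrow> smoothC (Suc 0) (f a)"
  unfolding is_DAE_def smooth_jet_def by blast

lemma indep_f:
  assumes dae: "is_DAE k f" and fe: "DP_feasible f p q" and l: "int (q m) - int (p a) < int l"
  shows "indep (f a) m l"
proof -
  have z: "pdx (f a) m l = (\<lambda>_ _. 0)"
  proof (rule ccontr)
    assume nz: "pdx (f a) m l \<noteq> (\<lambda>_ _. 0)"
    have "ereal (real_of_int (int (q m) - int (p a))) \<ge> sigma f a m" using fe unfolding DP_feasible_def by blast
    from sigma_mem_le[OF this nz] have "real_of_int (int l) \<le> real_of_int (int (q m) - int (p a))" by simp
    then have "int l \<le> int (q m) - int (p a)" by (simp only: of_int_le_iff)
    then show False using l by simp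
  qed
  show ?thesis unfolding indep_def
  proof (intro allI)
    fix Y t s
    have "DERIV (\<lambda>s. f a (jupd Y l m s) t) x :> 0" for x
      using smoothC1_diff[OF DAE_smooth1[OF dae, of a], where J="jupd Y l m x" and l=l and j=m and t=t] z by simp
    then have "f a (jupd Y l m s) t = f a (jupd Y l m (Y l m)) t"
      by (rule DERIV_isconst_all[rule_format, where f="\<lambda>s. f a (jupd Y l m s) t"])
    then show "f a (jupd Y l m s) t = f a Y t" by simp
  qed
qed

lemma bnd_g:
  assumes dae: "is_DAE k f" and fe: "DP_feasible f p q"
  shows "bnd (\<lambda>Y t. f a (Vsub V q Y) t) (\<lambda>m. int (q m) - int (p a))"
  unfolding bnd_def indep_def
proof (intro allI impI)
  fix j l Y t s assume l: "int (q j) - int (p a) < int l"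
  have "\<forall>m\<in>{m. q m \<le> q j \<and> q j \<le> l + q m}. indep (f a) m (l + q m - q j)"
    using l by (auto intro!: indep_f[OF dae fe])
  then show "f a (Vsub V q (jupd Y l j s)) t = f a (Vsub V q Y) t"
    unfolding Vsub_jupd by (rule addj_indep)
qed

lemma chain_g:
  assumes dae: "is_DAE k f" and ut: "upper_tri_along V q" and pq: "p a \<le> q j"
  shows "((\<lambda>s. f a (Vsub V q (jupd Y (q j - p a) j s)) t) has_real_derivative
          (\<Sum>b\<in>UNIV. V$b$j * sys_jacobian f p q a b (Vsub V q Y) t)) (at (Y (q j - p a) j))"
proof -
  define L where "L = q j - p a"
  define M where "M = {m. q m \<le> q j \<and> q j \<le> L + q m}"
  define lv where "lv = (\<lambda>m. L + q m - q j)"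
  define X where "X = Vsub V q Y"
  have e: "f a (Vsub V q (jupd Y L j s)) t = f a (addj X M lv (\<lambda>m. (s - Y L j) * V$m$j)) t" for s
    unfolding Vsub_jupd X_def M_def lv_def by (simp add: mult.commute)
  have d1: "((\<lambda>h. f a (addj X M lv (\<lambda>m. h * V$m$j)) t) has_real_derivative (\<Sum>m\<in>M. V$m$j * pdx (f a) m (lv m) X t)) (at (Y L j - Y L j))"
    using line_chain[OF DAE_smooth1[OF dae]] by simp
  have d2: "((\<lambda>s. s - Y L j) has_real_derivative 1) (at (Y L j))" by (auto intro!: derivative_eq_intros)
  have D: "((\<lambda>s. f a (Vsub V q (jupd Y L j s)) t) has_real_derivative (\<Sum>m\<in>M. V$m$j * pdx (f a) m (lv m) X t)) (at (Y L j))"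
    unfolding e using DERIV_chain2[OF d1 d2] by simp
  have "(\<Sum>m\<in>M. V$m$j * pdx (f a) m (lv m) X t) = (\<Sum>b\<in>UNIV. if b \<in> M then V$b$j * pdx (f a) b (lv b) X t else 0)"
    by (simp add: sum.If_cases)
  also have "\<dots> = (\<Sum>b\<in>UNIV. V$b$j * sys_jacobian f p q a b X t)"
  proof (rule sum.cong[OF refl])
    fix b
    show "(if b \<in> M then V$b$j * pdx (f a) b (lv b) X t else 0) = V$b$j * sys_jacobian f p q a b X t"
    proof (cases "b \<in> M")
      case True
      then have "p a \<le> q b" "lv b = q b - p a" using pq unfolding M_def lv_def L_def by auto
      then show ?thesis using True unfolding sys_jacobian_def by simp
    next
      case False
      show ?thesis
      proof (cases "q b \<le> q j")
        case True
        then have "q b < p a" using False pq unfolding M_def L_def by auto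
        then show ?thesis using False unfolding sys_jacobian_def by simp
      next
        case False': False
        then have "V$b$j = 0" using ut unfolding upper_tri_along_def by auto
        then show ?thesis using False by simp
      qed
    qed
  qed
  finally show ?thesis using D unfolding L_def X_def by simp
qed

lemma fprime_indep:
  assumes dae: "is_DAE k f" and fe: "DP_feasible f p q" and l: "int (q j) - int (p i) < int l"
  shows "indep (transformed_DAE k f U V p q i) j l"
proof -
  have T: "indep (Dtpow (k + Max (range q)) (p a - p i) (\<lambda>Y' t'. f a (Vsub V q Y') t')) j l" if "p i \<le> p a" for a
  proof -
    have "bnd (Dtpow (k + Max (range q)) (p a - p i) (\<lambda>Y' t'. f a (Vsub V q Y') t'))
        (\<lambda>m. (int (q m) - int (p a)) + int (p a - p i))"
      by (rule bnd_Dtpow[OF bnd_g[OF dae fe]])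
    moreover have "(int (q j) - int (p a)) + int (p a - p i) < int l" using l that by linarith
    ultimately show ?thesis unfolding bnd_def by blast
  qed
  show ?thesis unfolding indep_def transformed_DAE_def
    using T unfolding indep_def by (intro allI sum.cong) auto
qed

lemma fprime_deriv:
  assumes dae: "is_DAE k f" and fe: "DP_feasible f p q" and utU: "upper_tri_along U p"
    and utV: "upper_tri_along V q" and pq: "p i \<le> q j"
  shows "((\<lambda>s. transformed_DAE k f U V p q i (jupd Y (q j - p i) j s) t) has_real_derivative
     fmat_mult3 U (sys_jacobian f p q) V i j (Vsub V q Y) t) (at (Y (q j - p i) j))"
proof -
  define K where "K = k + Max (range q)"
  define c where "c a = (\<lambda>Y t. \<Sum>b\<in>UNIV. V$b$j * sys_jacobian f p q a b (Vsub V q Y) t)" for a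
  have trm: "((\<lambda>s. Dtpow K (p a - p i) (\<lambda>Y' t'. f a (Vsub V q Y') t') (jupd Y (q j - p i) j s) t)
     has_real_derivative (if 0 \<le> int (q j) - int (p a) then c a Y t else 0)) (at (Y (q j - p i) j))"
    if pa: "p i \<le> p a" for a
  proof -
    have qK: "int (q j) - int (p a) \<le> int K"
    proof -
      have "q j \<le> Max (range q)" by simp
      then show ?thesis unfolding K_def by linarith
    qed
    show ?thesis
    proof (rule Dtpow_lead[OF bnd_g[OF dae fe] qK])
      fix Y' t'
      assume "0 \<le> int (q j) - int (p a)"
      then have e: "nat (int (q j) - int (p a)) = q j - p a" "p a \<le> q j" by auto
      show "((\<lambda>s. f a (Vsub V q (jupd Y' (nat (int (q j) - int (p a))) j s)) t') has_real_derivative c a Y' t')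
           (at (Y' (nat (int (q j) - int (p a))) j))"
        unfolding e(1) c_def by (rule chain_g[where p=p and a=a and q=q and j=j, OF dae utV e(2)])
    next
      show "int (q j - p i) = int (q j) - int (p a) + int (p a - p i)" using pa pq by simp
    qed
  qed
  have D: "((\<lambda>s. transformed_DAE k f U V p q i (jupd Y (q j - p i) j s) t) has_real_derivative
     (\<Sum>a\<in>UNIV. if p i \<le> p a then U$i$a * (if 0 \<le> int (q j) - int (p a) then c a Y t else 0) else 0))
     (at (Y (q j - p i) j))"
    unfolding transformed_DAE_def K_def[symmetric]
    by (intro DERIV_sum) (auto intro!: derivative_eq_intros trm)
  have "(\<Sum>a\<in>UNIV. if p i \<le> p a then U$i$a * (if 0 \<le> int (q j) - int (p a) then c a Y t else 0) else 0)
      = fmat_mult3 U (sys_jacobian f p q) V i j (Vsub V q Y) t"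
    unfolding fmat_mult3_def
  proof (rule sum.cong[OF refl])
    fix a
    show "(if p i \<le> p a then U$i$a * (if 0 \<le> int (q j) - int (p a) then c a Y t else 0) else 0)
       = (\<Sum>b\<in>UNIV. U$i$a * sys_jacobian f p q a b (Vsub V q Y) t * V$b$j)"
    proof (cases "p i \<le> p a")
      case False
      then have "U$i$a = 0" using utU unfolding upper_tri_along_def by auto
      then show ?thesis using False by simp
    next
      case True
      show ?thesis
      proof (cases "p a \<le> q j")
        case True': True
        then show ?thesis using True unfolding c_def by (simp add: sum_distrib_left algebra_simps)
      next
        case False
        have z: "sys_jacobian f p q a b (Vsub V q Y) t * V$b$j = 0" for b
        proof (cases "p a \<le> q b")
          case True
          then have "q j < q b" using False by auto
          then have "V$b$j = 0" using utV unfolding upper_tri_along_def by auto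
          then show ?thesis by simp
        next
          case False then show ?thesis unfolding sys_jacobian_def by simp
        qed
        have "(\<Sum>b\<in>UNIV. U$i$a * sys_jacobian f p q a b (Vsub V q Y) t * V$b$j) = 0"
        proof (rule sum.neutral, intro ballI)
          fix b
          show "U$i$a * sys_jacobian f p q a b (Vsub V q Y) t * V$b$j = 0"
            using z[of b] by (simp only: mult.assoc)
        qed
        then show ?thesis using True False by simp
      qed
    qed
  qed
  then show ?thesis using D by simp
qed

lemma sigma_attained:
  assumes le: "sigma g i j \<le> ereal (real_of_int c)" and ne: "sigma g i j \<noteq> -\<infinity>"
  shows "\<exists>l0. pdx (g i) j l0 \<noteq> (\<lambda>_ _. 0) \<and> sigma g i j = ereal (real l0)"
proof -
  define S where "S = {l::nat. pdx (g i) j l \<noteq> (\<lambda>_ _. 0)}"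
  have sd: "sigma g i j = Sup ((\<lambda>l. ereal (real l)) ` S)" unfolding sigma_def S_def by simp
  have bnd: "real l \<le> real_of_int c" if "l \<in> S" for l
    using sigma_mem_le[OF le] that unfolding S_def by blast
  have "S \<noteq> {}"
  proof
    assume "S = {}"
    then have "sigma g i j = -\<infinity>" unfolding sd by (simp add: bot_ereal_def)
    then show False using ne by simp
  qed
  moreover have "finite S"
  proof (rule finite_subset)
    show "S \<subseteq> {..nat c}"
    proof
      fix l assume "l \<in> S"
      then have "real l \<le> real_of_int c" by (rule bnd)
      then show "l \<in> {..nat c}" by simp
    qed
  qed simp
  ultimately have "Sup ((\<lambda>l. ereal (real l)) ` S) \<in> (\<lambda>l. ereal (real l)) ` S"
    using Max_Sup[of "(\<lambda>l. ereal (real l)) ` S"] Max_in[of "(\<lambda>l. ereal (real l)) ` S"] by auto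
  then obtain l0 where "l0 \<in> S" "sigma g i j = ereal (real l0)" unfolding sd by auto
  then show ?thesis unfolding S_def by auto
qed

lemma sigma_below:
  assumes le: "sigma g i j \<le> ereal (real_of_int c)" and ne: "sigma g i j \<noteq> ereal (real_of_int c)"
  shows "sigma g i j \<le> ereal (real_of_int (c - 1))"
proof (cases "sigma g i j = -\<infinity>")
  case True then show ?thesis by simp
next
  case False
  from sigma_attained[OF le False] obtain l0 where l0: "sigma g i j = ereal (real l0)" by blast
  then have "real_of_int (int l0) \<le> real_of_int c" "real_of_int (int l0) \<noteq> real_of_int c" using le ne by auto
  then have "int l0 \<le> c - 1" by linarith
  then have "real_of_int (int l0) \<le> real_of_int (c - 1)" by (simp only: of_int_le_iff)
  then show ?thesis using l0 by simp
qed

lemma delta_hat_opt: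
  assumes "DP_optimal g p q"
  shows "delta_hat g = ereal (real_of_int (DP_obj p q))"
proof -
  have "(THE v. \<exists>p q. DP_optimal g p q \<and> v = DP_obj p q) = DP_obj p q"
  proof (rule the_equality)
    show "\<exists>p' q'. DP_optimal g p' q' \<and> DP_obj p q = DP_obj p' q'" using assms by blast
  next
    fix v assume "\<exists>p' q'. DP_optimal g p' q' \<and> v = DP_obj p' q'"
    then obtain p' q' where "DP_optimal g p' q'" "v = DP_obj p' q'" by blast
    then show "v = DP_obj p q" using assms unfolding DP_optimal_def by (meson order_antisym)
  qed
  then show ?thesis unfolding delta_hat_def using assms by auto
qed

lemma fprime_feasible:
  assumes dae: "is_DAE k f" and fe: "DP_feasible f p q"
  shows "DP_feasible (transformed_DAE k f U V p q) p q"
  unfolding DP_feasible_def sigma_def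
proof (intro allI SUP_least)
  fix i j l assume "l \<in> {l. pdx (transformed_DAE k f U V p q i) j l \<noteq> (\<lambda>_ _. 0)}"
  then have nz: "pdx (transformed_DAE k f U V p q i) j l \<noteq> (\<lambda>_ _. 0)" by simp
  have "int l \<le> int (q j) - int (p i)"
  proof (rule ccontr)
    assume "\<not> ?thesis"
    then have "indep (transformed_DAE k f U V p q i) j l" by (intro fprime_indep[OF dae fe]) auto
    then have "pdx (transformed_DAE k f U V p q i) j l = (\<lambda>_ _. 0)" using indep_pdx0 by (auto simp: fun_eq_iff)
    then show False using nz by simp
  qed
  then have "real_of_int (int l) \<le> real_of_int (int (q j) - int (p i))" by (simp only: of_int_le_iff)
  then show "ereal (real l) \<le> ereal (real_of_int (int (q j) - int (p i)))" by simp
qed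

lemma sum_shift:
  fixes q :: "'n::finite \<Rightarrow> nat"
  shows "(\<Sum>j\<in>UNIV. int (q j + (if j \<in> N then 1 else 0))) = (\<Sum>j\<in>UNIV. int (q j)) + int (card N)"
proof -
  have "(\<Sum>j\<in>UNIV. int (q j + (if j \<in> N then 1 else 0))) = (\<Sum>j\<in>UNIV. int (q j)) + (\<Sum>j\<in>UNIV. (if j \<in> N then 1 else 0))"
    unfolding sum.distrib[symmetric] by (rule sum.cong) auto
  also have "(\<Sum>j\<in>UNIV. (if j \<in> N then 1 else 0)) = int (card N)"
    by (simp add: sum.If_cases)
  finally show ?thesis .
qed

theorem theorem4:
  fixes f :: "'n::finite \<Rightarrow> 'n jet_fun" and k :: nat
    and p q :: "'n \<Rightarrow> nat" and U V :: "real^'n^'n"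
  assumes "is_DAE k f"
    and "delta_hat f \<noteq> -\<infinity>"
    and "DP_optimal f p q"
    and "invertible U" and "invertible V"
    and "trank (fmat_mult3 U (sys_jacobian f p q) V) < CARD('n)"
    and "upper_tri_along U p" and "upper_tri_along V q"
  shows "delta_hat (transformed_DAE k f U V p q) < delta_hat f"
proof -
  note dae = assms(1) and opt = assms(3) and tr = assms(6) and utU = assms(7) and utV = assms(8)
  define f' where "f' = transformed_DAE k f U V p q"
  have fe: "DP_feasible f p q" using opt unfolding DP_optimal_def by blast
  have df: "delta_hat f = ereal (real_of_int (DP_obj p q))" by (rule delta_hat_opt[OF opt])
  have fe': "DP_feasible f' p q" unfolding f'_def by (rule fprime_feasible[OF dae fe])
  have notopt: "\<not> DP_optimal f' p q"
  proof
    assume opt': "DP_optimal f' p q"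
    define E where "E i j \<longleftrightarrow> sigma f' i j = ereal (real_of_int (int (q j) - int (p i)))" for i j
    define A where "A i = {j. E i j}" for i
    have tight: "fmat_mult3 U (sys_jacobian f p q) V i j \<noteq> (\<lambda>_ _. 0)" if "E i j" for i j
    proof
      assume z: "fmat_mult3 U (sys_jacobian f p q) V i j = (\<lambda>_ _. 0)"
      have le: "sigma f' i j \<le> ereal (real_of_int (int (q j) - int (p i)))" using fe' unfolding DP_feasible_def by blast
      have "sigma f' i j \<noteq> -\<infinity>" using that unfolding E_def by simp
      from sigma_attained[OF le this] obtain l0 where l0: "pdx (f' i) j l0 \<noteq> (\<lambda>_ _. 0)" "sigma f' i j = ereal (real l0)"
        by blast
      then have "real l0 = real_of_int (int (q j) - int (p i))" using that unfolding E_def by simp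
      then have pq: "p i \<le> q j" "l0 = q j - p i" by linarith+
      have "pdx (f' i) j l0 Y t = 0" for Y t
      proof -
        have "pdx (f' i) j l0 Y t = fmat_mult3 U (sys_jacobian f p q) V i j (Vsub V q Y) t"
          unfolding pdx_def pq(2) f'_def
          by (rule DERIV_imp_deriv[OF fprime_deriv[OF dae fe utU utV pq(1)]])
        then show ?thesis using z by simp
      qed
      then show False using l0(1) by (auto simp: fun_eq_iff)
    qed
    show False
    proof (cases "\<forall>K\<subseteq>(UNIV::'n set). card K \<le> card (\<Union>(A ` K))")
      case True
      from hall[OF _ True] obtain \<pi> where pi: "inj_on \<pi> UNIV" "\<forall>i\<in>UNIV. \<pi> i \<in> A i" by auto
      define S where "S = (\<lambda>i. (i, \<pi> i)) ` (UNIV :: 'n set)"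
      have S1: "\<forall>(i,j)\<in>S. fmat_mult3 U (sys_jacobian f p q) V i j \<noteq> (\<lambda>_ _. 0)"
        using pi tight unfolding S_def A_def by auto
      have S2: "inj_on fst S" unfolding S_def inj_on_def by auto
      have S3: "inj_on snd S" using pi(1) unfolding S_def inj_on_def by auto
      have cS: "card S = CARD('n)" unfolding S_def by (rule card_image) (auto simp: inj_on_def)
      define T where "T = {card S | S. (\<forall>(i,j)\<in>S. fmat_mult3 U (sys_jacobian f p q) V i j \<noteq> (\<lambda>_ _. 0))
                              \<and> inj_on fst S \<and> inj_on snd S}"
      have "finite T"
      proof -
        have "T \<subseteq> card ` (Pow (UNIV :: ('n \<times> 'n) set))" unfolding T_def by auto
        then show ?thesis by (rule finite_subset) simp
      qed
      moreover have "card S \<in> T" unfolding T_def using S1 S2 S3 by blast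
      ultimately have "card S \<le> Max T" by simp
      then have "CARD('n) \<le> trank (fmat_mult3 U (sys_jacobian f p q) V)" unfolding trank_def T_def[symmetric] cS .
      then show False using tr by simp
    next
      case False
      then obtain K :: "'n set" where K: "card (\<Union>(A ` K)) < card K" by (auto simp: not_le)
      define N where "N = \<Union>(A ` K)"
      define p2 where "p2 i = p i + (if i \<in> K then 1 else 0)" for i
      define q2 where "q2 j = q j + (if j \<in> N then 1 else 0)" for j
      have fe2: "DP_feasible f' p2 q2"
        unfolding DP_feasible_def
      proof (intro allI)
        fix i j
        define c where "c = int (q j) - int (p i)"
        have le: "sigma f' i j \<le> ereal (real_of_int c)" using fe' unfolding DP_feasible_def c_def by blast
        show "sigma f' i j \<le> ereal (real_of_int (int (q2 j) - int (p2 i)))"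
        proof (cases "i \<in> K \<and> j \<notin> N")
          case True
          then have "\<not> E i j" unfolding N_def A_def by auto
          then have "sigma f' i j \<noteq> ereal (real_of_int c)" unfolding E_def c_def by simp
          from sigma_below[OF le this] have "sigma f' i j \<le> ereal (real_of_int (c - 1))" .
          moreover have "c - 1 = int (q2 j) - int (p2 i)" using True unfolding c_def p2_def q2_def by simp
          ultimately show ?thesis by simp
        next
          case False
          then have "c \<le> int (q2 j) - int (p2 i)" unfolding c_def p2_def q2_def by auto
          then have "ereal (real_of_int c) \<le> ereal (real_of_int (int (q2 j) - int (p2 i)))" by simp
          then show ?thesis using le by (rule order_trans[rotated])
        qed
      qed
      have "DP_obj p2 q2 = DP_obj p q + int (card N) - int (card K)"
        unfolding DP_obj_def p2_def q2_def sum_shift by simp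
      then have "DP_obj p2 q2 < DP_obj p q" using K unfolding N_def by simp
      moreover have "DP_obj p q \<le> DP_obj p2 q2" using opt' fe2 unfolding DP_optimal_def by blast
      ultimately show False by simp
    qed
  qed
  show ?thesis
  proof (cases "\<exists>p' q'. DP_optimal f' p' q'")
    case False
    then have "delta_hat f' = -\<infinity>" unfolding delta_hat_def by auto
    then show ?thesis unfolding df f'_def[symmetric] by simp
  next
    case True
    then obtain p' q' where o': "DP_optimal f' p' q'" by blast
    have "DP_obj p' q' \<le> DP_obj p q" using o' fe' unfolding DP_optimal_def by blast
    moreover have "DP_obj p' q' \<noteq> DP_obj p q"
    proof
      assume e: "DP_obj p' q' = DP_obj p q"
      have "DP_optimal f' p q" using o' fe' e unfolding DP_optimal_def by simp
      then show False using notopt by simp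
    qed
    ultimately have "DP_obj p' q' < DP_obj p q" by simp
    then show ?thesis unfolding df f'_def[symmetric] delta_hat_opt[OF o'] by simp
  qed
qed

end
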